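(* Let $X=\mathbb{Z}$, $\beta\in Sym(X)$ the translation $x\mapsto x+1$, and $n,m\geq1$. Let $c=c(a_1,\dots,a_n,b)$ be a nontrivial cyclically reduced word in $\mathbb{F}_{n+1}=\langle a_1,\dots,a_n,b\rangle$ with exponent sum of $b$ equal to zero, and $d=d(a'_1,\dots,a'_m,b')$ a nontrivial cyclically reduced word in $\mathbb{F}_{m+1}=\langle a'_1,\dots,a'_m,b'\rangle$ with exponent sum of $b'$ equal to zero. Let $\alpha=(\alpha_1,\dots,\alpha_n)\in Sym(X)^n$ be such that, for the action of $\mathbb{F}_{n+1}$ on $X$ given by $a_i\mapsto\alpha_i$, $b\mapsto\beta$ (so $c$ acts as $c(\alpha,\beta)$): the action is faithful and transitive; for every $w\in\mathbb{F}_{n+1}\setminus\langle c\rangle$ there are infinitely many $x$ with $cx=x$, $cwx=wx$, $wx\neq x$; there is a Følner sequence $(A_k)_{k\geq1}$ for this action consisting of pairwise disjoint sets with $|A_k|=k$, each pointwise fixed by $c$; for every $k\geq1$ there are infinitely many $\langle c\rangle$-orbits of size $k$; every $\langle c\rangle$-orbit is finite; and every finite index subgroup of $\mathbb{F}_{n+1}$ acts transitively. Let $\alpha'=(\alpha'_1,\dots,\alpha'_m)\in Sym(X)^m$ satisfy the same properties for $\mathbb{F}_{m+1}$ (via $a'_j\mapsto\alpha'_j$, $b'\mapsto\beta$) and $d$, with Følner sequence $(B_k)_{k\geq1}$. Let $Z=\{\sigma\in Sym(X):\sigma\, c(\alpha,\beta)=d(\alpha',\beta)\,\sigma\}$, with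 the topology of pointwise convergence. Then the set $\mathcal{O}_2=\{\sigma\in Z:\text{there is a subsequence }(k_l)_{l\geq1}\text{ with }\sigma(A_{k_l})=B_{k_l}\text{ for all }l\geq1\}$ is generic in $Z$.
   Context: A subset of a Baire space is meagre if it is a countable union of closed sets with empty interior, and generic (dense $G_\delta$) if its complement is meagre. $Z$ is closed in $Sym(X)$, hence a Baire space. A sequence $(A_k)$ of finite non-empty subsets is Følner for an action of a group $\Gamma$ if $|A_k\triangle gA_k|/|A_k|\to0$ for all $g\in\Gamma$. *)

theory Defs
  imports "HOL-Analysis.Analysis" "HOL-Algebra.Generated_Groups" "HOL-Algebra.Coset"
begin

(* Words in the free group on generators 0..N-1.  A letter is (i, e):
   generator i, inverted iff e = True. *)
type_synonym letter = "nat \<times> bool"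
type_synonym word = "letter list"

definition inv_letter :: "letter \<Rightarrow> letter" where
  "inv_letter l = (fst l, \<not> snd l)"

fun reduced :: "word \<Rightarrow> bool" where
  "reduced [] = True"
| "reduced [x] = True"
| "reduced (x # y # w) = (y \<noteq> inv_letter x \<and> reduced (y # w))"

fun reduce :: "word \<Rightarrow> word" where
  "reduce [] = []"
| "reduce (x # w) = (case reduce w of
      [] \<Rightarrow> [x]
    | y # r \<Rightarrow> (if y = inv_letter x then r else x # y # r))"

definition cyclically_reduced :: "word \<Rightarrow> bool" where
  "cyclically_reduced w \<longleftrightarrow> reduced w \<and> (w \<noteq> [] \<longrightarrow> last w \<noteq> inv_letter (hd w))"

definition words_on :: "nat \<Rightarrow> word set" where
  "words_on N = {w. \<forall>l\<in>set w. fst l < N}"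

definition free_grp :: "nat \<Rightarrow> word monoid" where
  "free_grp N = \<lparr>carrier = {w. reduced w \<and> w \<in> words_on N},
                 mult = (\<lambda>u v. reduce (u @ v)), one = []\<rparr>"

definition exp_sum :: "nat \<Rightarrow> word \<Rightarrow> int" where
  "exp_sum i w = (\<Sum>l\<leftarrow>w. if fst l = i then (if snd l then -1 else 1) else 0)"

definition beta :: "int \<Rightarrow> int" where
  "beta x = x + 1"

(* generators a_1..a_n are 0..n-1 and act by alpha 0 .. alpha (n-1); b is generator n, acting by beta *)
definition gens :: "nat \<Rightarrow> (nat \<Rightarrow> int \<Rightarrow> int) \<Rightarrow> nat \<Rightarrow> int \<Rightarrow> int" where
  "gens n \<alpha> i = (if i < n then \<alpha> i else beta)"

(* left action of a word: (g1 g2 ... gk) x = g1 (g2 (... gk x)) *)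
definition word_act :: "(nat \<Rightarrow> int \<Rightarrow> int) \<Rightarrow> word \<Rightarrow> int \<Rightarrow> int" where
  "word_act G w = foldr (\<lambda>l f. (if snd l then inv_into UNIV (G (fst l)) else G (fst l)) \<circ> f) w id"

definition foelner :: "('g \<Rightarrow> 'x \<Rightarrow> 'x) \<Rightarrow> 'g set \<Rightarrow> (nat \<Rightarrow> 'x set) \<Rightarrow> bool" where
  "foelner act \<Gamma> A \<longleftrightarrow>
     (\<forall>k\<ge>1. finite (A k) \<and> A k \<noteq> {}) \<and>
     (\<forall>g\<in>\<Gamma>. (\<lambda>k. real (card ((A k - act g ` A k) \<union> (act g ` A k - A k))) / real (card (A k)))
               \<longlonglongrightarrow> 0)"

definition orbit_of :: "(nat \<Rightarrow> int \<Rightarrow> int) \<Rightarrow> word set \<Rightarrow> int \<Rightarrow> int set" where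
  "orbit_of G H x = {word_act G h x | h. h \<in> H}"

definition good_action :: "nat \<Rightarrow> (nat \<Rightarrow> int \<Rightarrow> int) \<Rightarrow> word \<Rightarrow> (nat \<Rightarrow> int set) \<Rightarrow> bool" where
  "good_action n \<alpha> c A \<longleftrightarrow>
     (let F = free_grp (Suc n); G = gens n \<alpha>; C = generate F {c} in
       (\<forall>i<n. bij (\<alpha> i)) \<and>
       \<comment> \<open>faithful\<close>
       (\<forall>w\<in>carrier F. word_act G w = id \<longrightarrow> w = []) \<and>
       \<comment> \<open>transitive\<close>
       (\<forall>x y. \<exists>w\<in>carrier F. word_act G w x = y) \<and>
       \<comment> \<open>infinitely many common fixed points of c and w c w^-1, moved by w\<close>
       (\<forall>w\<in>carrier F - C. infinite {x. word_act G c x = x \<and>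
            word_act G c (word_act G w x) = word_act G w x \<and> word_act G w x \<noteq> x}) \<and>
       \<comment> \<open>Foelner sequence of pairwise disjoint sets of size k, pointwise fixed by c\<close>
       foelner (word_act G) (carrier F) A \<and>
       (\<forall>k\<ge>1. \<forall>l\<ge>1. k \<noteq> l \<longrightarrow> A k \<inter> A l = {}) \<and>
       (\<forall>k\<ge>1. card (A k) = k) \<and>
       (\<forall>k\<ge>1. \<forall>x\<in>A k. word_act G c x = x) \<and>
       \<comment> \<open>infinitely many <c>-orbits of each size k \<ge> 1\<close>
       (\<forall>k\<ge>1. infinite {Orb. (\<exists>x. Orb = orbit_of G C x) \<and> finite Orb \<and> card Orb = k}) \<and>
       \<comment> \<open>every <c>-orbit is finite\<close>
       (\<forall>x. finite (orbit_of G C x)) \<and>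
       \<comment> \<open>every finite index subgroup acts transitively\<close>
       (\<forall>H. subgroup H F \<and> finite (rcosets\<^bsub>F\<^esub> H) \<longrightarrow>
            (\<forall>x y. \<exists>h\<in>H. word_act G h x = y)))"

(* Sym(X) with the topology of pointwise convergence: subspace of Z^Z with Z discrete *)
definition pointwise_top :: "(int \<Rightarrow> int) topology" where
  "pointwise_top = product_topology (\<lambda>_. discrete_topology UNIV) UNIV"

definition meagre_in :: "'a topology \<Rightarrow> 'a set \<Rightarrow> bool" where
  "meagre_in T S \<longleftrightarrow> (\<exists>F :: nat \<Rightarrow> 'a set.
      (\<forall>k. closedin T (F k) \<and> T interior_of (F k) = {}) \<and> S = (\<Union>k. F k))"

definition generic_in :: "'a topology \<Rightarrow> 'a set \<Rightarrow> bool" where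
  "generic_in T S \<longleftrightarrow> S \<subseteq> topspace T \<and> meagre_in T (topspace T - S)"

end

theory Submission
  imports Defs
begin


definition step :: "letter \<Rightarrow> word \<Rightarrow> word" where
  "step x s = (case s of [] \<Rightarrow> [x] | y # r \<Rightarrow> (if y = inv_letter x then r else x # y # r))"

lemma reduce_Cons: "reduce (x # w) = step x (reduce w)"
  by (simp add: step_def)

lemma inv_letter_inv[simp]: "inv_letter (inv_letter x) = x"
  by (simp add: inv_letter_def)

lemma reduced_tl: "reduced (y # r) \<Longrightarrow> reduced r"
  by (cases r) auto

lemma reduced_step: "reduced s \<Longrightarrow> reduced (step x s)"
  by (cases s) (auto simp: step_def dest: reduced_tl)

lemma reduced_reduce: "reduced (reduce w)"
  by (induction w) (auto simp: reduce_Cons reduced_step simp del: reduce.simps(2))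

lemma reduce_reduced: "reduced w \<Longrightarrow> reduce w = w"
proof (induction w)
  case Nil then show ?case by simp
next
  case (Cons x w)
  then have "reduce w = w" using reduced_tl by blast
  then show ?case using Cons.prems by (cases w) (auto simp: reduce_Cons step_def simp del: reduce.simps(2))
qed

lemma reduce_idem[simp]: "reduce (reduce w) = reduce w"
  by (simp add: reduce_reduced reduced_reduce)

lemma reduce_app2: "reduce (u @ reduce v) = reduce (u @ v)"
  by (induction u) (auto simp: reduce_Cons simp del: reduce.simps(2))

lemma step_step_inv: "reduced s \<Longrightarrow> step x (step (inv_letter x) s) = s"
proof (cases s)
  case Nil then show ?thesis by (simp add: step_def)
next
  case (Cons z t)
  assume r: "reduced s"
  show ?thesis
  proof (cases "z = x")
    case True
    then show ?thesis using r Cons by (cases t) (auto simp: step_def)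
  next
    case False
    then show ?thesis using Cons by (auto simp: step_def)
  qed
qed

lemma reduce_step_app: "reduce (step x s @ v) = step x (reduce (s @ v))"
proof (cases s)
  case Nil then show ?thesis by (simp add: step_def reduce_Cons del: reduce.simps(2))
next
  case (Cons y r)
  show ?thesis
  proof (cases "y = inv_letter x")
    case True
    have 1: "step x s = r" using True Cons by (simp add: step_def)
    have 2: "reduce (s @ v) = step (inv_letter x) (reduce (r @ v))"
      using True Cons by (simp add: reduce_Cons del: reduce.simps(2))
    show ?thesis using 1 2 step_step_inv[OF reduced_reduce, of x "r @ v"] by simp
  next
    case False
    then show ?thesis using Cons by (simp add: step_def reduce_Cons del: reduce.simps(2))
  qed
qed

lemma reduce_app1: "reduce (reduce u @ v) = reduce (u @ v)"
proof (induction u)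
  case Nil then show ?case by simp
next
  case (Cons x u)
  have "reduce (reduce (x # u) @ v) = reduce (step x (reduce u) @ v)" by (simp add: reduce_Cons del: reduce.simps(2))
  also have "\<dots> = step x (reduce (reduce u @ v))" by (rule reduce_step_app)
  also have "\<dots> = step x (reduce (u @ v))" using Cons by simp
  finally show ?case by (simp add: reduce_Cons del: reduce.simps(2))
qed

definition rinv :: "word \<Rightarrow> word" where "rinv w = rev (map inv_letter w)"

lemma reduce_rinv_app: "reduce (rinv w @ (w @ v)) = reduce v"
proof (induction w)
  case Nil then show ?case by (simp add: rinv_def)
next
  case (Cons x w)
  have "reduce (rinv (x # w) @ ((x # w) @ v)) = reduce (rinv w @ (inv_letter x # x # (w @ v)))"
    by (simp add: rinv_def)
  also have "\<dots> = reduce (rinv w @ reduce (inv_letter x # x # (w @ v)))" by (rule reduce_app2[symmetric])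
  also have "reduce (inv_letter x # x # (w @ v)) = reduce (w @ v)"
    using step_step_inv[of "reduce (w @ v)" "inv_letter x"]
    by (simp add: reduce_Cons reduced_reduce del: reduce.simps(2))
  also have "reduce (rinv w @ reduce (w @ v)) = reduce v" using Cons by (simp only: reduce_app2)
  finally show ?case .
qed

lemma set_reduce: "set (reduce w) \<subseteq> set w"
proof (induction w)
  case Nil then show ?case by simp
next
  case (Cons x w) then show ?case
    by (auto simp: reduce_Cons step_def split: list.splits simp del: reduce.simps(2))
qed

lemma free_grp_group: "group (free_grp N)"
proof (rule groupI)
  fix x y assume "x \<in> carrier (free_grp N)" "y \<in> carrier (free_grp N)"
  then show "x \<otimes>\<^bsub>free_grp N\<^esub> y \<in> carrier (free_grp N)"
    using set_reduce[of "x @ y"] by (auto simp: free_grp_def words_on_def reduced_reduce)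
next
  show "\<one>\<^bsub>free_grp N\<^esub> \<in> carrier (free_grp N)" by (simp add: free_grp_def words_on_def)
next
  fix x y z
  show "x \<otimes>\<^bsub>free_grp N\<^esub> y \<otimes>\<^bsub>free_grp N\<^esub> z = x \<otimes>\<^bsub>free_grp N\<^esub> (y \<otimes>\<^bsub>free_grp N\<^esub> z)"
    by (simp add: free_grp_def reduce_app1 reduce_app2)
next
  fix x assume "x \<in> carrier (free_grp N)"
  then show "\<one>\<^bsub>free_grp N\<^esub> \<otimes>\<^bsub>free_grp N\<^esub> x = x"
    by (simp add: free_grp_def reduce_reduced)
next
  fix x assume x: "x \<in> carrier (free_grp N)"
  show "\<exists>y\<in>carrier (free_grp N). y \<otimes>\<^bsub>free_grp N\<^esub> x = \<one>\<^bsub>free_grp N\<^esub>"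
  proof (intro bexI)
    show "reduce (rinv x) \<otimes>\<^bsub>free_grp N\<^esub> x = \<one>\<^bsub>free_grp N\<^esub>"
      using reduce_rinv_app[of x "[]"] by (simp add: free_grp_def reduce_app1)
    have "\<forall>l\<in>set (reduce (rinv x)). fst l < N"
    proof
      fix l assume "l \<in> set (reduce (rinv x))"
      then have "l \<in> set (rinv x)" using set_reduce by blast
      then obtain l' where "l' \<in> set x" "l = inv_letter l'" by (auto simp: rinv_def)
      then show "fst l < N" using x by (auto simp: free_grp_def words_on_def inv_letter_def)
    qed
    then show "reduce (rinv x) \<in> carrier (free_grp N)"
      by (auto simp: free_grp_def words_on_def reduced_reduce)
  qed
qed

definition lact :: "(nat \<Rightarrow> int \<Rightarrow> int) \<Rightarrow> letter \<Rightarrow> int \<Rightarrow> int" where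
  "lact G l = (if snd l then inv_into UNIV (G (fst l)) else G (fst l))"

lemma word_act_Nil[simp]: "word_act G [] = id"
  by (simp add: word_act_def)

lemma word_act_Cons: "word_act G (x # w) = lact G x \<circ> word_act G w"
  by (simp add: word_act_def lact_def)

lemma word_act_app: "word_act G (u @ v) = word_act G u \<circ> word_act G v"
  by (induction u) (simp_all add: word_act_Cons comp_assoc)

lemma lact_inv: "(\<And>i. bij (G i)) \<Longrightarrow> lact G (inv_letter x) \<circ> lact G x = id"
  by (cases x) (auto simp: lact_def inv_letter_def fun_eq_iff bij_def surj_f_inv_f)

lemma bij_lact: "(\<And>i. bij (G i)) \<Longrightarrow> bij (lact G x)"
  by (auto simp: lact_def bij_imp_bij_inv)

lemma bij_word_act: "(\<And>i. bij (G i)) \<Longrightarrow> bij (word_act G w)"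
  by (induction w) (auto simp: word_act_Cons bij_lact intro: bij_comp)

lemma word_act_step: "(\<And>i. bij (G i)) \<Longrightarrow> word_act G (step x s) = word_act G (x # s)"
proof (cases s)
  case (Cons y r)
  assume b: "\<And>i. bij (G i)"
  show ?thesis
  proof (cases "y = inv_letter x")
    case True
    have "lact G x \<circ> lact G (inv_letter x) = id" using lact_inv[OF b, where x="inv_letter x"] by simp
    then show ?thesis using True Cons
      by (simp add: step_def word_act_Cons comp_assoc[symmetric])
  qed (use Cons in \<open>simp add: step_def\<close>)
qed (simp add: step_def)

lemma word_act_reduce: "(\<And>i. bij (G i)) \<Longrightarrow> word_act G (reduce w) = word_act G w"
  by (induction w) (simp_all add: reduce_Cons word_act_step word_act_Cons del: reduce.simps(2))


definition Of :: "('a \<Rightarrow> 'a) \<Rightarrow> 'a \<Rightarrow> 'a set" where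
  "Of f x = range (\<lambda>j. (f ^^ j) x)"

lemma Of_funpow: "(f ^^ j) x \<in> Of f x"
  by (auto simp: Of_def)

lemma Of_self: "x \<in> Of f x"
  using Of_funpow[where f=f and j=0 and x=x] by simp

lemma Of_f: "f x \<in> Of f x"
  using Of_funpow[where f=f and j=1 and x=x] by simp

lemma Of_trans: "y \<in> Of f x \<Longrightarrow> Of f y \<subseteq> Of f x"
proof
  fix z assume "y \<in> Of f x" "z \<in> Of f y"
  then obtain i j where "y = (f ^^ i) x" "z = (f ^^ j) y" by (auto simp: Of_def)
  then have "z = (f ^^ (j + i)) x" by (simp add: funpow_add)
  then show "z \<in> Of f x" by (simp add: Of_funpow)
qed

lemma funpow_cancel:
  assumes "inj f" "(f ^^ a) x = (f ^^ b) x" "a \<le> b"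
  shows "(f ^^ (b - a)) x = x"
proof -
  have "(f ^^ b) x = (f ^^ a) ((f ^^ (b - a)) x)"
    by (metis assms(3) funpow_add le_add_diff_inverse o_apply)
  then have "(f ^^ a) ((f ^^ (b - a)) x) = (f ^^ a) x" using assms(2) by simp
  moreover have "inj (f ^^ a)" using assms(1) by simp
  ultimately show ?thesis by (meson injD)
qed

lemma Of_period:
  assumes "inj f" "finite (Of f x)"
  obtains k where "0 < k" "(f ^^ k) x = x" "inj_on (\<lambda>j. (f ^^ j) x) {..<k}"
    "Of f x = (\<lambda>j. (f ^^ j) x) ` {..<k}" "card (Of f x) = k"
proof -
  have "\<not> inj (\<lambda>j. (f ^^ j) x)"
  proof
    assume "inj (\<lambda>j. (f ^^ j) x)"
    then have "finite (UNIV :: nat set)" using finite_imageD assms(2) unfolding Of_def by blast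
    then show False by simp
  qed
  then obtain i j where ij: "i \<noteq> j" "(f ^^ i) x = (f ^^ j) x" by (auto simp: inj_def)
  have ex: "\<exists>k. 0 < k \<and> (f ^^ k) x = x"
  proof (cases "i < j")
    case True
    then show ?thesis using funpow_cancel[OF assms(1) ij(2)] by (intro exI[of _ "j - i"]) auto
  next
    case False
    then have "j < i" using ij(1) by simp
    then show ?thesis using funpow_cancel[OF assms(1) ij(2)[symmetric]] by (intro exI[of _ "i - j"]) auto
  qed
  define k where "k = (LEAST k. 0 < k \<and> (f ^^ k) x = x)"
  have k: "0 < k" "(f ^^ k) x = x" using LeastI_ex[OF ex] unfolding k_def by auto
  have min: "\<And>m. 0 < m \<Longrightarrow> m < k \<Longrightarrow> (f ^^ m) x \<noteq> x"
    using not_less_Least unfolding k_def by blast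
  have inj: "inj_on (\<lambda>j. (f ^^ j) x) {..<k}"
  proof (rule inj_onI)
    fix a b assume ab: "a \<in> {..<k}" "b \<in> {..<k}" "(f ^^ a) x = (f ^^ b) x"
    show "a = b"
    proof (rule linorder_cases[of a b])
      assume lt: "a < b"
      have "(f ^^ (b - a)) x = x" using funpow_cancel[OF assms(1) ab(3)] lt by simp
      moreover have "0 < b - a" "b - a < k" using lt ab(2) by auto
      ultimately show ?thesis using min by blast
    next
      assume lt: "b < a"
      have "(f ^^ (a - b)) x = x" using funpow_cancel[OF assms(1) ab(3)[symmetric]] lt by simp
      moreover have "0 < a - b" "a - b < k" using lt ab(1) by auto
      ultimately show ?thesis using min by blast
    qed
  qed
  have eq: "Of f x = (\<lambda>j. (f ^^ j) x) ` {..<k}"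
  proof
    show "Of f x \<subseteq> (\<lambda>j. (f ^^ j) x) ` {..<k}"
    proof
      fix y assume "y \<in> Of f x"
      then obtain j where "y = (f ^^ j) x" by (auto simp: Of_def)
      then have "y = (f ^^ (j mod k)) x" using funpow_mod_eq[where f=f and n=k and x=x and m=j] k by simp
      moreover have "j mod k < k" using k by simp
      ultimately show "y \<in> (\<lambda>j. (f ^^ j) x) ` {..<k}" by blast
    qed
  qed (auto simp: Of_def)
  have "card (Of f x) = k" using eq inj by (simp add: card_image)
  then show ?thesis using that k inj eq by blast
qed

lemma Of_sym:
  assumes "inj f" "finite (Of f x)" "y \<in> Of f x"
  shows "x \<in> Of f y"
proof -
  obtain i where y: "y = (f ^^ i) x" using assms(3) by (auto simp: Of_def)
  obtain k where k: "0 < k" "(f ^^ k) x = x" using Of_period[OF assms(1,2)] by metis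
  have "((f ^^ k) ^^ i) x = x" by (induction i) (simp_all add: k)
  then have kx: "(f ^^ (k * i)) x = x" by (simp add: funpow_mult)
  have "i \<le> k * i" using k by simp
  have "(f ^^ (k * i - i + i)) x = (f ^^ (k * i - i)) ((f ^^ i) x)"
    by (simp only: funpow_add o_apply)
  then have "(f ^^ (k * i - i)) y = (f ^^ (k * i)) x"
    using \<open>i \<le> k * i\<close> y by simp
  then show ?thesis using kx by (metis Of_funpow)
qed

lemma Of_eq:
  assumes "inj f" "finite (Of f x)" "y \<in> Of f x"
  shows "Of f y = Of f x"
  by (rule equalityI[OF Of_trans[OF assms(3)] Of_trans[OF Of_sym[OF assms]]])

lemma Of_inv:
  assumes "inj f" "finite (Of f x)" "y \<in> Of f x"
  shows "inv_into UNIV f y \<in> Of f x"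
proof -
  have fy: "finite (Of f y)" using Of_trans[OF assms(3)] assms(2) finite_subset by blast
  obtain k where k: "0 < k" "(f ^^ k) y = y" using Of_period[OF assms(1) fy] by metis
  have "(f ^^ Suc (k - 1)) y = y" using k by simp
  then have eq: "f ((f ^^ (k - 1)) y) = y" by simp
  have "inv_into UNIV f (f ((f ^^ (k - 1)) y)) = (f ^^ (k - 1)) y"
    by (rule inv_into_f_f[OF assms(1) UNIV_I])
  then have "inv_into UNIV f y = (f ^^ (k - 1)) y" unfolding eq .
  then show ?thesis using Of_trans[OF assms(3)] Of_funpow[where f=f and j="k - 1" and x=y] by auto
qed

lemma orbit_of_Of:
  assumes bijG: "\<And>i. bij (G i)" and c: "c \<in> carrier (free_grp N)"
    and fin: "\<And>x. finite (orbit_of G (generate (free_grp N) {c}) x)"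
  shows "orbit_of G (generate (free_grp N) {c}) x = Of (word_act G c) x"
proof -
  define F where "F = free_grp N"
  define C where "C = generate F {c}"
  define f where "f = word_act G c"
  have grp: "group F" unfolding F_def by (rule free_grp_group)
  have bf: "bij f" unfolding f_def by (rule bij_word_act[OF bijG])
  then have injf: "inj f" by (simp add: bij_def)
  define cp :: "nat \<Rightarrow> word" where "cp j = ((\<lambda>w. reduce (c @ w)) ^^ j) []" for j
  have cpC: "cp j \<in> C" for j
  proof (induction j)
    case 0
    have "\<one>\<^bsub>F\<^esub> \<in> C" unfolding C_def by (rule generate.one)
    then show ?case by (simp add: cp_def F_def free_grp_def)
  next
    case (Suc j)
    have "c \<otimes>\<^bsub>F\<^esub> cp j \<in> C" unfolding C_def
      by (rule generate.eng[OF generate.incl]) (use Suc in \<open>auto simp: C_def\<close>)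
    then show ?case by (simp add: cp_def F_def free_grp_def)
  qed
  have cpact: "word_act G (cp j) = f ^^ j" for j
    by (induction j) (simp_all add: cp_def word_act_reduce[OF bijG] word_act_app f_def)
  have sub1: "Of f y \<subseteq> orbit_of G C y" for y
  proof
    fix z assume "z \<in> Of f y"
    then obtain j where "z = (f ^^ j) y" by (auto simp: Of_def)
    then have "z = word_act G (cp j) y" using cpact by simp
    then show "z \<in> orbit_of G C y" using cpC[of j] unfolding orbit_of_def by blast
  qed
  have finO: "finite (Of f y)" for y
    using sub1 fin finite_subset unfolding C_def F_def by blast
  have cinC: "c \<in> carrier F" using c F_def by simp
  have "inv\<^bsub>F\<^esub> c \<otimes>\<^bsub>F\<^esub> c = \<one>\<^bsub>F\<^esub>" using group.l_inv[OF grp cinC] .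
  then have "word_act G (inv\<^bsub>F\<^esub> c) \<circ> f = id"
    using word_act_reduce[OF bijG, where w="inv\<^bsub>F\<^esub> c @ c"]
    by (simp add: F_def free_grp_def word_act_app f_def)
  then have wf: "word_act G (inv\<^bsub>F\<^esub> c) (f z) = z" for z by (simp add: fun_eq_iff)
  have invc: "word_act G (inv\<^bsub>F\<^esub> c) = inv_into UNIV f"
  proof
    fix z
    have "f (inv_into UNIV f z) = z" using bf by (simp add: bij_is_surj surj_f_inv_f)
    then show "word_act G (inv\<^bsub>F\<^esub> c) z = inv_into UNIV f z" using wf by metis
  qed
  have main: "h \<in> C \<Longrightarrow> word_act G h y \<in> Of f y" for h y
    unfolding C_def
  proof (induction arbitrary: y rule: generate.induct)
    case one
    then show ?case by (simp add: F_def free_grp_def Of_self)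
  next
    case (incl h)
    then show ?case by (simp add: f_def Of_f)
  next
    case (inv h)
    then show ?case using invc Of_inv[OF injf finO Of_self] by simp
  next
    case (eng h1 h2)
    have "word_act G (h1 \<otimes>\<^bsub>F\<^esub> h2) y = word_act G h1 (word_act G h2 y)"
      by (simp add: F_def free_grp_def word_act_reduce[OF bijG] word_act_app)
    moreover have "word_act G h1 (word_act G h2 y) \<in> Of f (word_act G h2 y)" using eng.IH(1) .
    moreover have "Of f (word_act G h2 y) \<subseteq> Of f y" by (rule Of_trans[OF eng.IH(2)])
    ultimately show ?case by (metis subsetD)
  qed
  show ?thesis
  proof
    show "orbit_of G (generate (free_grp N) {c}) x \<subseteq> Of (word_act G c) x"
    proof
      fix z assume "z \<in> orbit_of G (generate (free_grp N) {c}) x"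
      then obtain h where "h \<in> C" "z = word_act G h x" unfolding orbit_of_def C_def F_def by blast
      then show "z \<in> Of (word_act G c) x" using main f_def by simp
    qed
    show "Of (word_act G c) x \<subseteq> orbit_of G (generate (free_grp N) {c}) x"
      using sub1 unfolding C_def F_def f_def by blast
  qed
qed



lemma single_conj:
  assumes "inj f" "inj g" "finite (Of f x0)" "finite (Of g y0)" "card (Of f x0) = card (Of g y0)"
  shows "\<exists>p. bij_betw p (Of f x0) (Of g y0) \<and> (\<forall>z\<in>Of f x0. p (f z) = g (p z))"
proof -
  obtain k where k: "0 < k" "(f ^^ k) x0 = x0" "inj_on (\<lambda>j. (f ^^ j) x0) {..<k}"
    "Of f x0 = (\<lambda>j. (f ^^ j) x0) ` {..<k}" "card (Of f x0) = k"
    using Of_period[OF assms(1,3)] by metis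
  obtain k' where k': "0 < k'" "(g ^^ k') y0 = y0" "card (Of g y0) = k'"
    using Of_period[OF assms(2,4)] by metis
  have kk: "k' = k" using k k' assms(5) by simp
  define p where "p z = (g ^^ (LEAST j. (f ^^ j) x0 = z)) y0" for z
  have pj: "p ((f ^^ j) x0) = (g ^^ j) y0" for j
  proof -
    have e: "(f ^^ (j mod k)) x0 = (f ^^ j) x0" using funpow_mod_eq[where f=f and n=k and x=x0 and m=j] k(2) by simp
    have l: "(LEAST i. (f ^^ i) x0 = (f ^^ j) x0) = j mod k"
    proof (rule Least_equality)
      show "(f ^^ (j mod k)) x0 = (f ^^ j) x0" by (rule e)
    next
      fix i assume i: "(f ^^ i) x0 = (f ^^ j) x0"
      show "j mod k \<le> i"
      proof (rule ccontr)
        assume "\<not> j mod k \<le> i"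
        moreover have "j mod k < k" using k(1) by simp
        ultimately have "i < k" "j mod k < k" "i \<noteq> j mod k" by auto
        then show False using inj_onD[OF k(3), of i "j mod k"] i e by auto
      qed
    qed
    have "(g ^^ (j mod k)) y0 = (g ^^ j) y0" using funpow_mod_eq[where f=g and n=k and x=y0 and m=j] k'(2) kk by simp
    then show ?thesis using l by (simp add: p_def)
  qed
  have comm: "\<forall>z\<in>Of f x0. p (f z) = g (p z)"
  proof
    fix z assume "z \<in> Of f x0"
    then obtain j where z: "z = (f ^^ j) x0" by (auto simp: Of_def)
    then have "f z = (f ^^ Suc j) x0" by simp
    then show "p (f z) = g (p z)" using pj[of "Suc j"] pj[of j] z by simp
  qed
  have img: "p ` Of f x0 = Of g y0"
  proof
    show "p ` Of f x0 \<subseteq> Of g y0" using pj by (auto simp: Of_def)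
    show "Of g y0 \<subseteq> p ` Of f x0"
    proof
      fix y assume "y \<in> Of g y0"
      then obtain j where "y = (g ^^ j) y0" by (auto simp: Of_def)
      then have "y = p ((f ^^ j) x0)" using pj by simp
      then show "y \<in> p ` Of f x0" using Of_funpow[where f=f and j=j and x=x0] by blast
    qed
  qed
  have "inj_on p (Of f x0)"
    by (rule eq_card_imp_inj_on[OF assms(3)]) (simp add: img assms(5))
  then show ?thesis using img comm by (auto simp: bij_betw_def)
qed

lemma conj_exists:
  fixes f g :: "int \<Rightarrow> int" and U V :: "int set"
  assumes bf: "bij f" and bg: "bij g" and ff: "\<And>x. finite (Of f x)" and fg: "\<And>x. finite (Of g x)"
    and cU: "\<And>x. x \<in> U \<Longrightarrow> Of f x \<subseteq> U" and cV: "\<And>y. y \<in> V \<Longrightarrow> Of g y \<subseteq> V"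
    and iU: "\<And>k. k \<ge> 1 \<Longrightarrow> infinite {Ob. \<exists>x\<in>U. Ob = Of f x \<and> card Ob = k}"
    and iV: "\<And>k. k \<ge> 1 \<Longrightarrow> infinite {Ob. \<exists>y\<in>V. Ob = Of g y \<and> card Ob = k}"
  shows "\<exists>\<psi>. bij_betw \<psi> U V \<and> (\<forall>x\<in>U. \<psi> (f x) = g (\<psi> x))"
proof -
  have injf: "inj f" and injg: "inj g" using bf bg by (auto simp: bij_def)
  define OU where "OU k = {Ob. \<exists>x\<in>U. Ob = Of f x \<and> card Ob = k}" for k
  define OV where "OV k = {Ob. \<exists>y\<in>V. Ob = Of g y \<and> card Ob = k}" for k
  have cntU: "countable (OU k)" for k
    by (rule countable_subset[of _ "range (Of f)"]) (auto simp: OU_def)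
  have cntV: "countable (OV k)" for k
    by (rule countable_subset[of _ "range (Of g)"]) (auto simp: OV_def)
  define \<Phi> where "\<Phi> k = from_nat_into (OV k) \<circ> to_nat_on (OU k)" for k
  have \<Phi>b: "bij_betw (\<Phi> k) (OU k) (OV k)" if "k \<ge> 1" for k
    unfolding \<Phi>_def
    by (rule bij_betw_trans[OF to_nat_on_infinite bij_betw_from_nat_into])
       (use cntU cntV iU iV that in \<open>auto simp: OU_def OV_def\<close>)
  have cardpos: "card (Of f x) \<ge> 1" for x
    using ff[of x] Of_self[of x f] by (metis One_nat_def Suc_leI card_gt_0_iff empty_iff)
  have cardposg: "card (Of g y) \<ge> 1" for y
    using fg[of y] Of_self[of y g] by (metis One_nat_def Suc_leI card_gt_0_iff empty_iff)
  have inOU: "Of f x \<in> OU (card (Of f x))" if "x \<in> U" for x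
    using that by (auto simp: OU_def)
  have \<Phi>V: "\<exists>y\<in>V. \<Phi> (card (Of f x)) (Of f x) = Of g y \<and> card (Of g y) = card (Of f x)"
    if "x \<in> U" for x
  proof -
    have "\<Phi> (card (Of f x)) (Of f x) \<in> OV (card (Of f x))"
      using \<Phi>b[OF cardpos[of x]] inOU[OF that] by (auto simp: bij_betw_def)
    then show ?thesis by (auto simp: OV_def)
  qed
  define good where "good Ob p \<longleftrightarrow> bij_betw p Ob (\<Phi> (card Ob) Ob) \<and> (\<forall>z\<in>Ob. p (f z) = g (p z))"
    for Ob p
  have exgood: "\<exists>p. good (Of f x) p" if xU: "x \<in> U" for x
  proof -
    obtain y where y: "y \<in> V" "\<Phi> (card (Of f x)) (Of f x) = Of g y" "card (Of g y) = card (Of f x)"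
      using \<Phi>V[OF xU] by blast
    obtain p where "bij_betw p (Of f x) (Of g y)" "\<forall>z\<in>Of f x. p (f z) = g (p z)"
      using single_conj[OF injf injg ff fg y(3)[symmetric]] by blast
    then show ?thesis using y unfolding good_def by auto
  qed
  define \<Psi> where "\<Psi> Ob = (SOME p. good Ob p)" for Ob
  have g\<Psi>: "good (Of f x) (\<Psi> (Of f x))" if "x \<in> U" for x
    unfolding \<Psi>_def using someI_ex[OF exgood[OF that]] .
  define \<psi> where "\<psi> x = \<Psi> (Of f x) x" for x
  have Ofeq: "Of f y = Of f x" if "y \<in> Of f x" for x y
    using Of_eq[OF injf ff that] .
  have Ofeqg: "Of g y = Of g x" if "y \<in> Of g x" for x y
    using Of_eq[OF injg fg that] .
  have comm: "\<psi> (f x) = g (\<psi> x)" if "x \<in> U" for x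
  proof -
    have e: "Of f (f x) = Of f x" by (rule Ofeq[OF Of_f])
    have "\<forall>z\<in>Of f x. \<Psi> (Of f x) (f z) = g (\<Psi> (Of f x) z)" using g\<Psi>[OF that] unfolding good_def by blast
    then have "\<Psi> (Of f x) (f x) = g (\<Psi> (Of f x) x)" using Of_self[of x f] by blast
    then show ?thesis unfolding \<psi>_def e .
  qed
  have inPhi: "\<psi> x \<in> \<Phi> (card (Of f x)) (Of f x)" if "x \<in> U" for x
    using g\<Psi>[OF that] Of_self[of x f] unfolding \<psi>_def good_def bij_betw_def by blast
  have maps: "\<psi> x \<in> V" if xU: "x \<in> U" for x
  proof -
    obtain y where y: "y \<in> V" "\<Phi> (card (Of f x)) (Of f x) = Of g y"
      using \<Phi>V[OF xU] by blast
    have "\<psi> x \<in> Of g y" using inPhi[OF xU] y(2) by simp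
    then show ?thesis using cV[OF y(1)] by blast
  qed
  have inj: "inj_on \<psi> U"
  proof (rule inj_onI)
    fix x1 x2 assume x: "x1 \<in> U" "x2 \<in> U" "\<psi> x1 = \<psi> x2"
    obtain y1 where y1: "y1 \<in> V" "\<Phi> (card (Of f x1)) (Of f x1) = Of g y1" "card (Of g y1) = card (Of f x1)"
      using \<Phi>V[OF x(1)] by blast
    obtain y2 where y2: "y2 \<in> V" "\<Phi> (card (Of f x2)) (Of f x2) = Of g y2" "card (Of g y2) = card (Of f x2)"
      using \<Phi>V[OF x(2)] by blast
    have w1: "\<psi> x1 \<in> Of g y1" using inPhi[OF x(1)] y1 by simp
    have w2: "\<psi> x1 \<in> Of g y2" using inPhi[OF x(2)] y2 x(3) by simp
    have gg: "Of g y1 = Of g y2" using Ofeqg[OF w1] Ofeqg[OF w2] by simp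
    then have same: "card (Of f x1) = card (Of f x2)" using y1(3) y2(3) by simp
    have i2: "Of f x2 \<in> OU (card (Of f x1))" using inOU[OF x(2)] same by simp
    have ph: "\<Phi> (card (Of f x1)) (Of f x1) = \<Phi> (card (Of f x1)) (Of f x2)"
      using y1(2) y2(2) gg same by simp
    have eqO: "Of f x1 = Of f x2"
      using inj_onD[OF bij_betw_imp_inj_on[OF \<Phi>b[OF cardpos[of x1]]] ph inOU[OF x(1)] i2] .
    have ij: "inj_on (\<Psi> (Of f x1)) (Of f x1)"
      using g\<Psi>[OF x(1)] unfolding good_def bij_betw_def by blast
    have x2in: "x2 \<in> Of f x1" using Of_self[of x2 f] eqO by simp
    have "\<Psi> (Of f x1) x1 = \<Psi> (Of f x1) x2" using x(3) eqO unfolding \<psi>_def by simp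
    then show "x1 = x2" using inj_onD[OF ij _ Of_self x2in] by blast
  qed
  have surj: "V \<subseteq> \<psi> ` U"
  proof
    fix y assume y: "y \<in> V"
    define k where "k = card (Of g y)"
    have k1: "k \<ge> 1" using cardposg k_def by simp
    have "Of g y \<in> OV k" using y k_def by (auto simp: OV_def)
    then have "Of g y \<in> \<Phi> k ` OU k" using \<Phi>b[OF k1] by (simp add: bij_betw_def)
    then obtain Ob where Ob: "Ob \<in> OU k" "\<Phi> k Ob = Of g y" by (metis imageE)
    then obtain x0 where x0: "x0 \<in> U" "Ob = Of f x0" "card Ob = k" by (auto simp: OU_def)
    have "bij_betw (\<Psi> Ob) Ob (Of g y)" using g\<Psi>[OF x0(1)] x0 Ob unfolding good_def by simp
    then have "y \<in> \<Psi> Ob ` Ob" using Of_self[of y g] unfolding bij_betw_def by simp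
    then obtain x where x: "x \<in> Ob" "\<Psi> Ob x = y" by blast
    have xU: "x \<in> U" using x(1) x0(2) cU[OF x0(1)] by blast
    have "Of f x = Ob" using Ofeq[of x x0] x(1) x0(2) by simp
    then have "\<psi> x = y" using x by (simp add: \<psi>_def)
    then show "y \<in> \<psi> ` U" using xU by blast
  qed
  have "bij_betw \<psi> U V" using inj surj maps unfolding bij_betw_def by blast
  then show ?thesis using comm by blast
qed



lemma fin_unique:
  assumes "\<And>k l. P k \<Longrightarrow> P l \<Longrightarrow> k = l"
  shows "finite (Collect P)"
proof (cases "\<exists>k. P k")
  case True
  then obtain k where "P k" by blast
  then have "Collect P \<subseteq> {k}" using assms by blast
  then show ?thesis using finite_subset by blast
next
  case False
  then have "Collect P = {}" by blast
  then show ?thesis by (metis finite.emptyI)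
qed

lemma Of_fixed: "f x = x \<Longrightarrow> Of f x = {x}"
proof -
  assume a: "f x = x"
  have "(f ^^ j) x = x" for j by (induction j) (simp_all add: a)
  then show ?thesis by (auto simp: Of_def)
qed

lemma compl_closed:
  assumes "inj f" "\<And>x. finite (Of f x)" "\<And>y. y \<in> P \<Longrightarrow> Of f y \<subseteq> P" "x \<notin> P"
  shows "Of f x \<subseteq> - P"
proof
  fix z assume z: "z \<in> Of f x"
  show "z \<in> - P"
  proof
    assume "z \<in> P"
    then have "Of f z \<subseteq> P" using assms(3) by blast
    moreover have "x \<in> Of f z" using Of_sym[OF assms(1) assms(2) z] .
    ultimately show False using assms(4) by blast
  qed
qed

lemma density:
  fixes f g \<sigma> :: "int \<Rightarrow> int" and A B :: "nat \<Rightarrow> int set" and E :: "int set"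
  assumes bf: "bij f" and bg: "bij g" and ff: "\<And>x. finite (Of f x)" and fg: "\<And>x. finite (Of g x)"
    and iF: "\<And>k. k \<ge> 1 \<Longrightarrow> infinite {Ob. (\<exists>x. Ob = Of f x) \<and> finite Ob \<and> card Ob = k}"
    and iG: "\<And>k. k \<ge> 1 \<Longrightarrow> infinite {Ob. (\<exists>x. Ob = Of g x) \<and> finite Ob \<and> card Ob = k}"
    and cA: "\<And>k. k \<ge> 1 \<Longrightarrow> card (A k) = k" and cB: "\<And>k. k \<ge> 1 \<Longrightarrow> card (B k) = k"
    and dA: "\<And>k l. k \<ge> 1 \<Longrightarrow> l \<ge> 1 \<Longrightarrow> k \<noteq> l \<Longrightarrow> A k \<inter> A l = {}"
    and dB: "\<And>k l. k \<ge> 1 \<Longrightarrow> l \<ge> 1 \<Longrightarrow> k \<noteq> l \<Longrightarrow> B k \<inter> B l = {}"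
    and fA: "\<And>k x. k \<ge> 1 \<Longrightarrow> x \<in> A k \<Longrightarrow> f x = x"
    and gB: "\<And>k x. k \<ge> 1 \<Longrightarrow> x \<in> B k \<Longrightarrow> g x = x"
    and bs: "bij \<sigma>" and cs: "\<sigma> \<circ> f = g \<circ> \<sigma>" and fE: "finite E"
  shows "\<exists>k \<tau>. k \<ge> N \<and> k \<ge> 1 \<and> bij \<tau> \<and> \<tau> \<circ> f = g \<circ> \<tau> \<and> (\<forall>x\<in>E. \<tau> x = \<sigma> x) \<and> \<tau> ` A k = B k"
proof -
  have injf: "inj f" and injg: "inj g" using bf bg by (auto simp: bij_def)
  have cs': "\<sigma> (f x) = g (\<sigma> x)" for x using cs by (metis comp_apply)
  have spow: "\<sigma> ((f ^^ j) x) = (g ^^ j) (\<sigma> x)" for j x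
    by (induction j) (simp_all add: cs')
  have sOf: "\<sigma> ` Of f x = Of g (\<sigma> x)" for x
  proof
    show "\<sigma> ` Of f x \<subseteq> Of g (\<sigma> x)" by (auto simp: Of_def spow)
    show "Of g (\<sigma> x) \<subseteq> \<sigma> ` Of f x"
    proof
      fix z assume "z \<in> Of g (\<sigma> x)"
      then obtain j where "z = (g ^^ j) (\<sigma> x)" by (auto simp: Of_def)
      then have "z = \<sigma> ((f ^^ j) x)" by (simp add: spow)
      then show "z \<in> \<sigma> ` Of f x" using Of_funpow[where f=f and j=j and x=x] by blast
    qed
  qed
  define S where "S = (\<Union>x\<in>E. Of f x)"
  define T where "T = \<sigma> ` S"
  have finS: "finite S" using fE ff by (simp add: S_def)
  have finT: "finite T" using finS by (simp add: T_def)
  have Scl: "Of f y \<subseteq> S" if yS: "y \<in> S" for y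
  proof -
    obtain e where e: "e \<in> E" "y \<in> Of f e" using yS unfolding S_def by blast
    have "Of f y \<subseteq> Of f e" by (rule Of_trans[OF e(2)])
    then show ?thesis using e(1) unfolding S_def by blast
  qed
  have Teq: "T = (\<Union>x\<in>E. Of g (\<sigma> x))" using sOf unfolding T_def S_def by (simp add: image_UN)
  have Tcl: "Of g y \<subseteq> T" if yT: "y \<in> T" for y
  proof -
    obtain e where e: "e \<in> E" "y \<in> Of g (\<sigma> e)" using yT unfolding Teq by blast
    have "Of g y \<subseteq> Of g (\<sigma> e)" by (rule Of_trans[OF e(2)])
    then show ?thesis using e(1) unfolding Teq by blast
  qed
  define bad where "bad = {k. k \<ge> 1 \<and> A k \<inter> S \<noteq> {}} \<union> {k. k \<ge> 1 \<and> B k \<inter> T \<noteq> {}} \<union> {N}"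
  have fin1: "finite {k. k \<ge> 1 \<and> A k \<inter> S \<noteq> {}}"
  proof -
    have "{k. k \<ge> 1 \<and> A k \<inter> S \<noteq> {}} \<subseteq> (\<Union>y\<in>S. {k. k \<ge> 1 \<and> y \<in> A k})" by blast
    moreover have "finite {k. k \<ge> 1 \<and> y \<in> A k}" for y
    proof (rule fin_unique)
      fix k l assume "k \<ge> 1 \<and> y \<in> A k" "l \<ge> 1 \<and> y \<in> A l"
      then show "k = l" using dA[of k l] by blast
    qed
    then have "finite (\<Union>y\<in>S. {k. k \<ge> 1 \<and> y \<in> A k})" using finS by blast
    ultimately show ?thesis by (rule finite_subset)
  qed
  have fin2: "finite {k. k \<ge> 1 \<and> B k \<inter> T \<noteq> {}}"
  proof -
    have "{k. k \<ge> 1 \<and> B k \<inter> T \<noteq> {}} \<subseteq> (\<Union>y\<in>T. {k. k \<ge> 1 \<and> y \<in> B k})" by blast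
    moreover have "finite {k. k \<ge> 1 \<and> y \<in> B k}" for y
    proof (rule fin_unique)
      fix k l assume "k \<ge> 1 \<and> y \<in> B k" "l \<ge> 1 \<and> y \<in> B l"
      then show "k = l" using dB[of k l] by blast
    qed
    then have "finite (\<Union>y\<in>T. {k. k \<ge> 1 \<and> y \<in> B k})" using finT by blast
    ultimately show ?thesis by (rule finite_subset)
  qed
  have finbad: "finite bad" using fin1 fin2 by (simp add: bad_def)
  define K where "K = Max bad + 1"
  have Kgt: "k < K" if "k \<in> bad" for k using Max_ge[OF finbad that] by (simp add: K_def)
  have KN: "K \<ge> N" using Kgt[of N] by (simp add: bad_def)
  have K1: "K \<ge> 1" by (simp add: K_def)
  have AS: "A K \<inter> S = {}" using Kgt[of K] K1 by (auto simp: bad_def)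
  have BT: "B K \<inter> T = {}" using Kgt[of K] K1 by (auto simp: bad_def)
  have finAK: "finite (A K)" using cA[OF K1] K1 by (metis card.infinite not_one_le_zero)
  have finBK: "finite (B K)" using cB[OF K1] K1 by (metis card.infinite not_one_le_zero)
  define P where "P = S \<union> A K"
  define Q where "Q = T \<union> B K"
  have Pcl: "Of f y \<subseteq> P" if yP: "y \<in> P" for y
  proof (cases "y \<in> S")
    case True
    then show ?thesis using Scl[OF True] by (auto simp: P_def)
  next
    case False
    then have yA: "y \<in> A K" using yP by (simp add: P_def)
    have "f y = y" by (rule fA[OF K1 yA])
    then have "Of f y = {y}" by (rule Of_fixed)
    then show ?thesis using yP by simp
  qed
  have Qcl: "Of g y \<subseteq> Q" if yP: "y \<in> Q" for y
  proof (cases "y \<in> T")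
    case True
    then show ?thesis using Tcl[OF True] by (auto simp: Q_def)
  next
    case False
    then have yA: "y \<in> B K" using yP by (simp add: Q_def)
    have "g y = y" by (rule gB[OF K1 yA])
    then have "Of g y = {y}" by (rule Of_fixed)
    then show ?thesis using yP by simp
  qed
  define U where "U = - P"
  define V where "V = - Q"
  have cU: "Of f x \<subseteq> U" if "x \<in> U" for x
    using compl_closed[OF injf ff Pcl] that unfolding U_def by blast
  have cV: "Of g x \<subseteq> V" if "x \<in> V" for x
    using compl_closed[OF injg fg Qcl] that unfolding V_def by blast
  have finP: "finite P" using finS finAK by (simp add: P_def)
  have finQ: "finite Q" using finT finBK by (simp add: Q_def)
  have iU: "infinite {Ob. \<exists>x\<in>U. Ob = Of f x \<and> card Ob = k}" if "k \<ge> 1" for k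
  proof
    assume fin: "finite {Ob. \<exists>x\<in>U. Ob = Of f x \<and> card Ob = k}"
    have "{Ob. (\<exists>x. Ob = Of f x) \<and> finite Ob \<and> card Ob = k} \<subseteq>
          {Ob. \<exists>x\<in>U. Ob = Of f x \<and> card Ob = k} \<union> Of f ` P"
      unfolding U_def by blast
    then show False using fin finP iF[OF that] finite_subset by blast
  qed
  have iV: "infinite {Ob. \<exists>x\<in>V. Ob = Of g x \<and> card Ob = k}" if "k \<ge> 1" for k
  proof
    assume fin: "finite {Ob. \<exists>x\<in>V. Ob = Of g x \<and> card Ob = k}"
    have "{Ob. (\<exists>x. Ob = Of g x) \<and> finite Ob \<and> card Ob = k} \<subseteq>
          {Ob. \<exists>x\<in>V. Ob = Of g x \<and> card Ob = k} \<union> Of g ` Q"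
      unfolding V_def by blast
    then show False using fin finQ iG[OF that] finite_subset by blast
  qed
  obtain \<psi> where psi: "bij_betw \<psi> U V" "\<forall>x\<in>U. \<psi> (f x) = g (\<psi> x)"
    using conj_exists[OF bf bg ff fg cU cV iU iV] by blast
  obtain h where h: "bij_betw h (A K) (B K)"
    using finite_same_card_bij[OF finAK finBK] cA[OF K1] cB[OF K1] by auto
  define \<tau> where "\<tau> x = (if x \<in> S then \<sigma> x else if x \<in> A K then h x else \<psi> x)" for x
  have b1: "bij_betw \<tau> S T"
  proof -
    have "bij_betw \<sigma> S T" unfolding T_def
      using bs by (meson bij_betw_def bij_betw_subset subset_UNIV)
    then show ?thesis by (rule bij_betw_cong[THEN iffD1, rotated]) (simp add: \<tau>_def)
  qed
  have b2: "bij_betw \<tau> (A K) (B K)"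
    using h by (rule bij_betw_cong[THEN iffD1, rotated]) (use AS in \<open>auto simp: \<tau>_def\<close>)
  have b3: "bij_betw \<tau> U V"
    using psi(1) by (rule bij_betw_cong[THEN iffD1, rotated]) (auto simp: \<tau>_def U_def P_def)
  have "bij_betw \<tau> (S \<union> A K \<union> U) (T \<union> B K \<union> V)"
    by (rule bij_betw_combine[OF bij_betw_combine[OF b1 b2]]) (use b3 BT in \<open>auto simp: V_def Q_def\<close>)
  moreover have "S \<union> A K \<union> U = UNIV" "T \<union> B K \<union> V = UNIV"
    by (auto simp: U_def P_def V_def Q_def)
  ultimately have bt: "bij \<tau>" by simp
  have ct: "\<tau> (f x) = g (\<tau> x)" for x
  proof (cases "x \<in> S")
    case True
    then have "f x \<in> S" using Scl[OF True] Of_f[of f x] by blast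
    then show ?thesis using True cs' by (simp add: \<tau>_def)
  next
    case False
    show ?thesis
    proof (cases "x \<in> A K")
      case True
      then have "h x \<in> B K" using h by (auto simp: bij_betw_def)
      then show ?thesis using True False fA[OF K1 True] gB[OF K1] by (simp add: \<tau>_def)
    next
      case False2: False
      then have xU: "x \<in> U" using False by (simp add: U_def P_def)
      then have "f x \<in> U" using cU[OF xU] Of_f[of f x] by blast
      then show ?thesis using xU psi(2) by (auto simp: \<tau>_def U_def P_def)
    qed
  qed
  have "\<forall>x\<in>E. \<tau> x = \<sigma> x"
  proof
    fix x assume "x \<in> E"
    then have "x \<in> S" using Of_self[of x f] unfolding S_def by blast
    then show "\<tau> x = \<sigma> x" by (simp add: \<tau>_def)
  qed
  moreover have "\<tau> ` A K = B K"
  proof -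
    have "\<tau> ` A K = h ` A K" using AS by (auto simp: \<tau>_def)
    then show ?thesis using h by (simp add: bij_betw_def)
  qed
  ultimately show ?thesis using KN K1 bt ct by (intro exI[of _ K] exI[of _ \<tau>]) (auto simp: fun_eq_iff)
qed



lemma topspace_pw[simp]: "topspace pointwise_top = UNIV"
  by (simp add: pointwise_top_def PiE_def extensional_def)

lemma generic_main:
  fixes Z :: "(int \<Rightarrow> int) set" and A B :: "nat \<Rightarrow> int set"
  assumes finA: "\<And>k. k \<ge> 1 \<Longrightarrow> finite (A k)"
    and dense: "\<And>\<sigma> E N. \<sigma> \<in> Z \<Longrightarrow> finite E \<Longrightarrow>
        \<exists>k \<tau>. k \<ge> N \<and> k \<ge> 1 \<and> \<tau> \<in> Z \<and> (\<forall>x\<in>E. \<tau> x = \<sigma> x) \<and> \<tau> ` A k = B k"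
  shows "generic_in (subtopology pointwise_top Z)
           {\<sigma> \<in> Z. \<exists>r :: nat \<Rightarrow> nat. strict_mono r \<and> (\<forall>l. r l \<ge> 1 \<and> \<sigma> ` A (r l) = B (r l))}"
proof -
  define T where "T = subtopology pointwise_top Z"
  define O2 where "O2 = {\<sigma> \<in> Z. \<exists>r :: nat \<Rightarrow> nat. strict_mono r \<and> (\<forall>l. r l \<ge> 1 \<and> \<sigma> ` A (r l) = B (r l))}"
  have tsp: "topspace T = Z" by (simp add: T_def)
  define Nb where "Nb \<sigma> E = {\<tau> \<in> Z. \<forall>x\<in>E. \<tau> x = \<sigma> x}" for \<sigma> :: "int \<Rightarrow> int" and E
  have nb_open: "openin T (Nb \<sigma> E)" if fE: "finite E" for \<sigma> E
  proof -
    define X where "X i = (if i \<in> E then {\<sigma> i} else (UNIV :: int set))" for i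
    have "openin pointwise_top (\<Pi>\<^sub>E i\<in>UNIV. X i)"
      unfolding pointwise_top_def
    proof (rule product_topology_basis)
      show "openin (discrete_topology UNIV) (X i)" for i by simp
      have "{i. X i \<noteq> topspace (discrete_topology UNIV)} \<subseteq> E" by (auto simp: X_def)
      then show "finite {i. X i \<noteq> topspace (discrete_topology UNIV)}" using fE finite_subset by blast
    qed
    moreover have "Nb \<sigma> E = (\<Pi>\<^sub>E i\<in>UNIV. X i) \<inter> Z"
      by (auto simp: Nb_def X_def PiE_iff extensional_def split: if_splits; metis singletonD)
    ultimately show ?thesis unfolding T_def openin_subtopology by blast
  qed
  have nb_basis: "\<exists>E. finite E \<and> Nb \<sigma> E \<subseteq> W" if W: "openin T W" "\<sigma> \<in> W" for W \<sigma>
  proof -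
    obtain W' where W': "openin pointwise_top W'" "W = W' \<inter> Z"
      using W(1) unfolding T_def openin_subtopology by blast
    then have "\<sigma> \<in> W'" using W(2) by blast
    then obtain U where U: "finite {i \<in> UNIV. U i \<noteq> topspace (discrete_topology (UNIV :: int set))}"
      "\<sigma> \<in> (\<Pi>\<^sub>E i\<in>UNIV. U i)" "(\<Pi>\<^sub>E i\<in>UNIV. U i) \<subseteq> W'"
      using W'(1) unfolding pointwise_top_def openin_product_topology_alt by blast
    define E where "E = {i. U i \<noteq> UNIV}"
    have "finite E" using U(1) by (simp add: E_def)
    moreover have "Nb \<sigma> E \<subseteq> W"
    proof
      fix \<tau> assume t: "\<tau> \<in> Nb \<sigma> E"
      have "\<tau> i \<in> U i" for i
      proof (cases "i \<in> E")
        case True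
        then show ?thesis using t U(2) by (auto simp: Nb_def PiE_def)
      next
        case False
        then show ?thesis by (simp add: E_def)
      qed
      then have "\<tau> \<in> (\<Pi>\<^sub>E i\<in>UNIV. U i)" by (simp add: PiE_def extensional_def)
      then show "\<tau> \<in> W" using t U(3) W'(2) by (auto simp: Nb_def)
    qed
    ultimately show ?thesis by blast
  qed
  define Ug where "Ug N = {\<sigma> \<in> Z. \<exists>k. k \<ge> N \<and> k \<ge> 1 \<and> \<sigma> ` A k = B k}" for N
  have Ug_open: "openin T (Ug N)" for N
  proof (subst openin_subopen, intro ballI)
    fix \<sigma> assume s: "\<sigma> \<in> Ug N"
    then obtain k where k: "\<sigma> \<in> Z" "k \<ge> N" "k \<ge> 1" "\<sigma> ` A k = B k" by (auto simp: Ug_def)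
    have "Nb \<sigma> (A k) \<subseteq> Ug N"
    proof
      fix \<tau> assume t: "\<tau> \<in> Nb \<sigma> (A k)"
      then have "\<tau> ` A k = \<sigma> ` A k" by (auto simp: Nb_def intro: image_cong)
      then have "\<tau> ` A k = B k" using k(4) by simp
      moreover have "\<tau> \<in> Z" using t by (simp add: Nb_def)
      ultimately show "\<tau> \<in> Ug N" using k(2,3) unfolding Ug_def by blast
    qed
    moreover have "\<sigma> \<in> Nb \<sigma> (A k)" using k by (simp add: Nb_def)
    ultimately show "\<exists>T'. openin T T' \<and> \<sigma> \<in> T' \<and> T' \<subseteq> Ug N"
      using nb_open[OF finA[OF k(3)]] by blast
  qed
  have Ug_sub: "Ug N \<subseteq> Z" for N by (auto simp: Ug_def)
  define Fm where "Fm N = Z - Ug N" for N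
  have closed: "closedin T (Fm N)" for N
  proof -
    have "topspace T - Fm N = Ug N" using Ug_sub[of N] by (auto simp: tsp Fm_def)
    then show ?thesis unfolding closedin_def using Ug_open[of N] by (simp add: tsp Fm_def)
  qed
  have interior: "T interior_of (Fm N) = {}" for N
    unfolding interior_of_eq_empty
  proof (intro allI impI)
    fix W assume W: "openin T W \<and> W \<subseteq> Fm N"
    show "W = {}"
    proof (rule ccontr)
      assume "W \<noteq> {}"
      then obtain \<sigma> where s: "\<sigma> \<in> W" by blast
      obtain E where E: "finite E" "Nb \<sigma> E \<subseteq> W" using nb_basis W s by blast
      have sZ: "\<sigma> \<in> Z" using s W by (auto simp: Fm_def)
      obtain k \<tau> where kt: "k \<ge> N" "k \<ge> 1" "\<tau> \<in> Z" "\<forall>x\<in>E. \<tau> x = \<sigma> x" "\<tau> ` A k = B k"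
        using dense[OF sZ E(1), of N] by blast
      have "\<tau> \<in> Nb \<sigma> E" using kt by (simp add: Nb_def)
      then have "\<tau> \<in> Fm N" using E W by blast
      moreover have "\<tau> \<in> Ug N" using kt by (auto simp: Ug_def)
      ultimately show False by (simp add: Fm_def)
    qed
  qed
  have eq: "topspace T - O2 = (\<Union>N. Fm N)"
  proof
    show "topspace T - O2 \<subseteq> (\<Union>N. Fm N)"
    proof
      fix \<sigma> assume s: "\<sigma> \<in> topspace T - O2"
      then have sZ: "\<sigma> \<in> Z" by (simp add: tsp)
      show "\<sigma> \<in> (\<Union>N. Fm N)"
      proof (rule ccontr)
        assume "\<sigma> \<notin> (\<Union>N. Fm N)"
        then have all: "\<sigma> \<in> Ug N" for N using sZ by (auto simp: Fm_def)
        define I where "I = {k. k \<ge> 1 \<and> \<sigma> ` A k = B k}"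
        have "\<exists>n\<ge>m. n \<in> I" for m using all[of m] by (auto simp: Ug_def I_def)
        then have inf: "infinite I" by (simp add: infinite_nat_iff_unbounded_le)
        define r where "r = enumerate I"
        have "strict_mono r" unfolding r_def strict_mono_def using enumerate_mono[OF _ inf] by blast
        moreover have "r l \<in> I" for l unfolding r_def using enumerate_in_set[OF inf] .
        ultimately have "\<sigma> \<in> O2" using sZ by (auto simp: O2_def I_def)
        then show False using s by blast
      qed
    qed
    show "(\<Union>N. Fm N) \<subseteq> topspace T - O2"
    proof
      fix \<sigma> assume "\<sigma> \<in> (\<Union>N. Fm N)"
      then obtain N where N: "\<sigma> \<in> Fm N" by blast
      have "\<sigma> \<notin> O2"
      proof
        assume "\<sigma> \<in> O2"
        then obtain r :: "nat \<Rightarrow> nat" where r: "strict_mono r" "\<forall>l. r l \<ge> 1 \<and> \<sigma> ` A (r l) = B (r l)"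
          unfolding O2_def by blast
        have "r N \<ge> N" using seq_suble[OF r(1)] .
        then have "\<sigma> \<in> Ug N" using r(2) N by (auto simp: Ug_def Fm_def)
        then show False using N by (simp add: Fm_def)
      qed
      then show "\<sigma> \<in> topspace T - O2" using N by (auto simp: Fm_def tsp)
    qed
  qed
  have "O2 \<subseteq> topspace T" by (auto simp: O2_def tsp)
  moreover have "meagre_in T (topspace T - O2)"
    unfolding meagre_in_def using closed interior eq by blast
  ultimately show ?thesis unfolding generic_in_def T_def O2_def by simp
qed


lemma bij_beta: "bij beta"
  unfolding beta_def by (rule bij_betwI[where g="\<lambda>x. x - 1"]) auto

lemma bij_gens: "\<forall>i<n. bij (\<alpha> i) \<Longrightarrow> bij (gens n \<alpha> i)"
  by (simp add: gens_def bij_beta)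

lemma extract_props:
  assumes "good_action n \<alpha> c A" "c \<in> words_on (Suc n)" "cyclically_reduced c"
  shows "bij (word_act (gens n \<alpha>) c)"
    "\<And>x. finite (Of (word_act (gens n \<alpha>) c) x)"
    "\<And>k. k \<ge> 1 \<Longrightarrow> infinite {Ob. (\<exists>x. Ob = Of (word_act (gens n \<alpha>) c) x) \<and> finite Ob \<and> card Ob = k}"
    "\<And>k. k \<ge> 1 \<Longrightarrow> card (A k) = k"
    "\<And>k l. k \<ge> 1 \<Longrightarrow> l \<ge> 1 \<Longrightarrow> k \<noteq> l \<Longrightarrow> A k \<inter> A l = {}"
    "\<And>k x. k \<ge> 1 \<Longrightarrow> x \<in> A k \<Longrightarrow> word_act (gens n \<alpha>) c x = x"
proof -
  define F where "F = free_grp (Suc n)"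
  define G where "G = gens n \<alpha>"
  define C where "C = generate F {c}"
  have ga: "(\<forall>i<n. bij (\<alpha> i)) \<and>
       (\<forall>k\<ge>1. infinite {Orb. (\<exists>x. Orb = orbit_of G C x) \<and> finite Orb \<and> card Orb = k}) \<and>
       (\<forall>x. finite (orbit_of G C x)) \<and>
       (\<forall>k\<ge>1. \<forall>l\<ge>1. k \<noteq> l \<longrightarrow> A k \<inter> A l = {}) \<and>
       (\<forall>k\<ge>1. card (A k) = k) \<and>
       (\<forall>k\<ge>1. \<forall>x\<in>A k. word_act G c x = x)"
    using assms(1) unfolding good_action_def Let_def F_def G_def C_def by blast
  have bG: "\<And>i. bij (G i)" unfolding G_def using ga bij_gens by blast
  have cF: "c \<in> carrier (free_grp (Suc n))"
    using assms(2,3) by (simp add: free_grp_def cyclically_reduced_def)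
  have oe: "orbit_of G C x = Of (word_act G c) x" for x
    unfolding C_def F_def by (rule orbit_of_Of[OF bG cF]) (use ga in \<open>simp add: C_def F_def\<close>)
  show "bij (word_act (gens n \<alpha>) c)" using bij_word_act[OF bG] by (simp add: G_def)
  show "finite (Of (word_act (gens n \<alpha>) c) x)" for x
  proof -
    have "finite (orbit_of G C x)" using ga by blast
    then have "finite (Of (word_act G c) x)" using oe[of x] by simp
    then show ?thesis by (simp add: G_def)
  qed
  show "infinite {Ob. (\<exists>x. Ob = Of (word_act (gens n \<alpha>) c) x) \<and> finite Ob \<and> card Ob = k}" if "k \<ge> 1" for k
  proof -
    have "{Orb. (\<exists>x. Orb = orbit_of G C x) \<and> finite Orb \<and> card Orb = k} =
          {Ob. (\<exists>x. Ob = Of (word_act (gens n \<alpha>) c) x) \<and> finite Ob \<and> card Ob = k}"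
      using oe by (simp add: G_def)
    moreover have "infinite {Orb. (\<exists>x. Orb = orbit_of G C x) \<and> finite Orb \<and> card Orb = k}"
      using ga that by blast
    ultimately show ?thesis by simp
  qed
  show "card (A k) = k" if "k \<ge> 1" for k using ga that by blast
  show "A k \<inter> A l = {}" if "k \<ge> 1" "l \<ge> 1" "k \<noteq> l" for k l using ga that by blast
  show "word_act (gens n \<alpha>) c x = x" if "k \<ge> 1" "x \<in> A k" for k x using ga that by (simp add: G_def)
qed

theorem proposition13:
  fixes n m :: nat and c d :: word
    and \<alpha> \<alpha>' :: "nat \<Rightarrow> int \<Rightarrow> int" and A B :: "nat \<Rightarrow> int set"
  assumes "n \<ge> 1" and "m \<ge> 1"
    and "c \<in> words_on (Suc n)" and "c \<noteq> []" and "cyclically_reduced c" and "exp_sum n c = 0"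
    and "d \<in> words_on (Suc m)" and "d \<noteq> []" and "cyclically_reduced d" and "exp_sum m d = 0"
    and "good_action n \<alpha> c A"
    and "good_action m \<alpha>' d B"
  shows "generic_in
           (subtopology pointwise_top
              {\<sigma>. bij \<sigma> \<and> \<sigma> \<circ> word_act (gens n \<alpha>) c = word_act (gens m \<alpha>') d \<circ> \<sigma>})
           {\<sigma>. bij \<sigma> \<and> \<sigma> \<circ> word_act (gens n \<alpha>) c = word_act (gens m \<alpha>') d \<circ> \<sigma> \<and>
                (\<exists>r :: nat \<Rightarrow> nat. strict_mono r \<and> (\<forall>l. r l \<ge> 1 \<and> \<sigma> ` A (r l) = B (r l)))}"
proof -
  define f where "f = word_act (gens n \<alpha>) c"
  define g where "g = word_act (gens m \<alpha>') d"
  define Z where "Z = {\<sigma>. bij \<sigma> \<and> \<sigma> \<circ> f = g \<circ> \<sigma>}"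
  have e11: "bij f" unfolding f_def by (rule extract_props(1)[OF assms(11) assms(3) assms(5)])
  have e12: "\<And>x. finite (Of f x)" unfolding f_def by (rule extract_props(2)[OF assms(11) assms(3) assms(5)])
  have e13: "\<And>k. k \<ge> 1 \<Longrightarrow> infinite {Ob. (\<exists>x. Ob = Of f x) \<and> finite Ob \<and> card Ob = k}"
    unfolding f_def by (rule extract_props(3)[OF assms(11) assms(3) assms(5)])
  have e14: "\<And>k. k \<ge> 1 \<Longrightarrow> card (A k) = k" by (rule extract_props(4)[OF assms(11) assms(3) assms(5)])
  have e15: "\<And>k l. k \<ge> 1 \<Longrightarrow> l \<ge> 1 \<Longrightarrow> k \<noteq> l \<Longrightarrow> A k \<inter> A l = {}"
    by (rule extract_props(5)[OF assms(11) assms(3) assms(5)])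
  have e16: "\<And>k x. k \<ge> 1 \<Longrightarrow> x \<in> A k \<Longrightarrow> f x = x"
    unfolding f_def by (rule extract_props(6)[OF assms(11) assms(3) assms(5)])
  have e21: "bij g" unfolding g_def by (rule extract_props(1)[OF assms(12) assms(7) assms(9)])
  have e22: "\<And>x. finite (Of g x)" unfolding g_def by (rule extract_props(2)[OF assms(12) assms(7) assms(9)])
  have e23: "\<And>k. k \<ge> 1 \<Longrightarrow> infinite {Ob. (\<exists>x. Ob = Of g x) \<and> finite Ob \<and> card Ob = k}"
    unfolding g_def by (rule extract_props(3)[OF assms(12) assms(7) assms(9)])
  have e24: "\<And>k. k \<ge> 1 \<Longrightarrow> card (B k) = k" by (rule extract_props(4)[OF assms(12) assms(7) assms(9)])
  have e25: "\<And>k l. k \<ge> 1 \<Longrightarrow> l \<ge> 1 \<Longrightarrow> k \<noteq> l \<Longrightarrow> B k \<inter> B l = {}"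
    by (rule extract_props(5)[OF assms(12) assms(7) assms(9)])
  have e26: "\<And>k x. k \<ge> 1 \<Longrightarrow> x \<in> B k \<Longrightarrow> g x = x"
    unfolding g_def by (rule extract_props(6)[OF assms(12) assms(7) assms(9)])

  have finA: "finite (A k)" if "k \<ge> 1" for k
    using e14[OF that] that by (metis card.infinite not_one_le_zero)
  have dense: "\<exists>k \<tau>. k \<ge> N \<and> k \<ge> 1 \<and> \<tau> \<in> Z \<and> (\<forall>x\<in>E. \<tau> x = \<sigma> x) \<and> \<tau> ` A k = B k"
    if sZ: "\<sigma> \<in> Z" and fE: "finite E" for \<sigma> E N
  proof -
    have s: "bij \<sigma>" "\<sigma> \<circ> f = g \<circ> \<sigma>" using sZ by (auto simp: Z_def)
    have "\<exists>k \<tau>. k \<ge> N \<and> k \<ge> 1 \<and> bij \<tau> \<and> \<tau> \<circ> f = g \<circ> \<tau> \<and> (\<forall>x\<in>E. \<tau> x = \<sigma> x) \<and> \<tau> ` A k = B k"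
      apply (rule density[where N=N])
      apply (rule e11) apply (rule e21) apply (rule e12) apply (rule e22)
      apply (rule e13, assumption) apply (rule e23, assumption)
      apply (rule e14, assumption) apply (rule e24, assumption)
      apply (rule e15, assumption+) apply (rule e25, assumption+)
      apply (rule e16, assumption+) apply (rule e26, assumption+)
      apply (rule s(1)) apply (rule s(2)) apply (rule fE)
      done
    then obtain k \<tau> where kt: "k \<ge> N" "k \<ge> 1" "bij \<tau>" "\<tau> \<circ> f = g \<circ> \<tau>" "\<forall>x\<in>E. \<tau> x = \<sigma> x" "\<tau> ` A k = B k"
      by blast
    then show ?thesis unfolding Z_def by blast
  qed
  have "generic_in (subtopology pointwise_top Z)
           {\<sigma> \<in> Z. \<exists>r :: nat \<Rightarrow> nat. strict_mono r \<and> (\<forall>l. r l \<ge> 1 \<and> \<sigma> ` A (r l) = B (r l))}"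
    by (rule generic_main[OF finA dense])
  moreover have "{\<sigma> \<in> Z. \<exists>r :: nat \<Rightarrow> nat. strict_mono r \<and> (\<forall>l. r l \<ge> 1 \<and> \<sigma> ` A (r l) = B (r l))} =
    {\<sigma>. bij \<sigma> \<and> \<sigma> \<circ> f = g \<circ> \<sigma> \<and>
                (\<exists>r :: nat \<Rightarrow> nat. strict_mono r \<and> (\<forall>l. r l \<ge> 1 \<and> \<sigma> ` A (r l) = B (r l)))}"
    unfolding Z_def by blast
  ultimately show ?thesis unfolding Z_def f_def g_def by simp
qed

end
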